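(* Let $N\ge1$, let $\mathbf{h}_{1,N},\dots,\mathbf{h}_{N,N}\in\mathbb{R}^d$ be arbitrary points and $0<r_{1,N}\le r_{2,N}\le\dots\le r_{N,N}$ radii. Define $$\mathbf{R}_N(\mathbf{h}_{1,N},\dots,\mathbf{h}_{N,N})=\mathbf{R}_{r_{1,N}}(\mathbf{h}_{1,N})\circ\mathbf{R}_{5r_{2,N}}(\mathbf{h}_{2,N})\circ\cdots\circ\mathbf{R}_{5^{N-1}r_{N,N}}(\mathbf{h}_{N,N}).$$ Then for every solenoidal $\boldsymbol\varphi\in L^p_{\rm loc}(\mathbb{R}^d;\mathbb{R}^d)$ ($1<p<\infty$) and every $n=1,\dots,N$, the field $\mathbf{R}_N(\mathbf{h}_{1,N},\dots,\mathbf{h}_{N,N})[\boldsymbol\varphi]$ is equal to a constant vector $\Lambda_n$ on the ball $B_{r_{n,N}}(\mathbf{h}_{n,N})$.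
   Context: Let $H\in C^\infty(\mathbb{R})$ with $0\le H\le1$, $H'(Z)=H'(1-Z)$ for all $Z$, $H(Z)=0$ for $Z\le1/4$, $H(Z)=1$ for $Z\ge3/4$. For $\varphi\in L^1_{\rm loc}(\mathbb{R}^d)$ and $r>0$ let $E_r[\varphi](x)=\frac1{|B_r(0)|}\int_{B_r(0)}\varphi\,dz\,H(2-\frac{|x|}{r})+\varphi(x)H(\frac{|x|}{r}-1)$ (applied componentwise to vector fields). For a solenoidal vector field $\boldsymbol\varphi$ set $\mathbf{R}_r[\boldsymbol\varphi]=E_r[\boldsymbol\varphi]-\mathcal{B}_{2r,r}[\mathrm{div}_xE_r[\boldsymbol\varphi]|_{B_{2r}(0)\setminus B_r(0)}]$, where $\mathcal{B}_{2r,r}$ is the Bogovskii operator on the annulus $B_{2r}(0)\setminus\overline{B_r(0)}$ (a bounded right inverse of the divergence taking zero-mean $L^p$ functions on the annulus to $W^{1,p}_0$ vector fields on the annulus, extended by zero, obtained by scaling from the annulus with radii $1,2$). For $\mathbf{h}\in\mathbb{R}^d$, $\mathbf{R}_r(\mathbf{h})[\boldsymbol\varphi]=S_{-\mathbf{h}}\mathbf{R}_r[S_{\mathbf{h}}\boldsymbol\varphi]$ with $S_{\mathbf{h}}f(x)=f(\mathbf{h}+x)$. This operator extends to solenoidal $L^p_{\rm loc}$ fields, preserves solenoidality, equals the average $\frac1{|B_r(\mathbf{h})|}\int_{B_r(\mathbf{h})}\boldsymbol\varphi$ on $B_r(\mathbf{h})$, equals $\boldsymbol\varphi$ on $\{|x-\mathbf{h}|>2r\}$,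 and satisfies $\mathbf{R}_r(\mathbf{h})[\boldsymbol\varphi]=\boldsymbol\varphi$ whenever $\boldsymbol\varphi$ is constant on $B_{2r}(\mathbf{h})$. *)

theory Defs
  imports "HOL-Analysis.Analysis"
begin

coinductive smooth_fun :: "('a::euclidean_space \<Rightarrow> real) \<Rightarrow> bool" where
  "(\<forall>x. f differentiable (at x)) \<Longrightarrow>
   (\<forall>b\<in>Basis. smooth_fun (\<lambda>x. frechet_derivative f (at x) b)) \<Longrightarrow> smooth_fun f"

definition grad :: "('a::euclidean_space \<Rightarrow> real) \<Rightarrow> 'a \<Rightarrow> 'a" where
  "grad f x = (\<Sum>b\<in>Basis. frechet_derivative f (at x) b *\<^sub>R b)"

definition test_fun :: "('a::euclidean_space \<Rightarrow> real) \<Rightarrow> bool" where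
  "test_fun \<psi> \<longleftrightarrow> smooth_fun \<psi> \<and> compact (closure {x. \<psi> x \<noteq> 0})"

definition Lp_loc :: "real \<Rightarrow> ('a::euclidean_space \<Rightarrow> 'a) \<Rightarrow> bool" where
  "Lp_loc p \<phi> \<longleftrightarrow> \<phi> \<in> borel_measurable lebesgue \<and>
     (\<forall>K. compact K \<longrightarrow> set_integrable lebesgue K (\<lambda>x. norm (\<phi> x) powr p))"

definition solenoidal :: "('a::euclidean_space \<Rightarrow> 'a) \<Rightarrow> bool" where
  "solenoidal \<phi> \<longleftrightarrow> (\<forall>\<psi>. test_fun \<psi> \<longrightarrow> (LINT x|lebesgue. \<phi> x \<bullet> grad \<psi> x) = 0)"

definition cutoff :: "(real \<Rightarrow> real) \<Rightarrow> bool" where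
  "cutoff H \<longleftrightarrow> smooth_fun H \<and> (\<forall>Z. 0 \<le> H Z \<and> H Z \<le> 1) \<and>
     (\<forall>Z. deriv H Z = deriv H (1 - Z)) \<and>
     (\<forall>Z. Z \<le> 1/4 \<longrightarrow> H Z = 0) \<and> (\<forall>Z. Z \<ge> 3/4 \<longrightarrow> H Z = 1)"

definition annulus1 :: "'a::euclidean_space set" where
  "annulus1 = ball 0 2 - cball 0 1"

definition bog_adm :: "real \<Rightarrow> ('a::euclidean_space \<Rightarrow> real) \<Rightarrow> bool" where
  "bog_adm p f \<longleftrightarrow> f \<in> borel_measurable lebesgue \<and> (\<forall>x. x \<notin> annulus1 \<longrightarrow> f x = 0) \<and>
     integrable lebesgue (\<lambda>x. \<bar>f x\<bar> powr p) \<and> (LINT x|lebesgue. f x) = 0"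

text \<open>A Bogovskii operator: linear on admissible data, values are fields on the annulus
  extended by zero, in W^{1,p} with the gradient bounded in L^p by the data,
  and a (weak) right inverse of the divergence on the annulus.\<close>
definition bogovskii :: "real \<Rightarrow> (('a::euclidean_space \<Rightarrow> real) \<Rightarrow> 'a \<Rightarrow> 'a) \<Rightarrow> bool" where
  "bogovskii p Bog \<longleftrightarrow>
     (\<forall>f x. x \<notin> annulus1 \<longrightarrow> Bog f x = 0) \<and>
     (\<forall>f g a b. bog_adm p f \<longrightarrow> bog_adm p g \<longrightarrow>
        Bog (\<lambda>x. a * f x + b * g x) = (\<lambda>x. a *\<^sub>R Bog f x + b *\<^sub>R Bog g x)) \<and>
     (\<forall>f. bog_adm p f \<longrightarrow>
        (\<forall>\<psi>. test_fun \<psi> \<longrightarrow> closure {x. \<psi> x \<noteq> 0} \<subseteq> annulus1 \<longrightarrow>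
           (LINT x|lebesgue. Bog f x \<bullet> grad \<psi> x) = - (LINT x|lebesgue. f x * \<psi> x))) \<and>
     (\<exists>C. \<forall>f. bog_adm p f \<longrightarrow>
        Bog f \<in> borel_measurable lebesgue \<and>
        integrable lebesgue (\<lambda>x. norm (Bog f x) powr p) \<and>
        (\<forall>i\<in>Basis. \<forall>j\<in>Basis. \<exists>g. g \<in> borel_measurable lebesgue \<and>
            integrable lebesgue (\<lambda>x. \<bar>g x\<bar> powr p) \<and>
            (LINT x|lebesgue. \<bar>g x\<bar> powr p) \<le> C * (LINT x|lebesgue. \<bar>f x\<bar> powr p) \<and>
            (\<forall>\<psi>. test_fun \<psi> \<longrightarrow>
               (LINT x|lebesgue. (Bog f x \<bullet> i) * (grad \<psi> x \<bullet> j)) = - (LINT x|lebesgue. g x * \<psi> x))))"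

definition bog_scaled :: "(('a::euclidean_space \<Rightarrow> real) \<Rightarrow> 'a \<Rightarrow> 'a) \<Rightarrow> real \<Rightarrow> ('a \<Rightarrow> real) \<Rightarrow> 'a \<Rightarrow> 'a" where
  "bog_scaled Bog r g x = r *\<^sub>R Bog (\<lambda>y. g (r *\<^sub>R y)) (x /\<^sub>R r)"

definition ball_avg :: "real \<Rightarrow> ('a::euclidean_space \<Rightarrow> 'a) \<Rightarrow> 'a" where
  "ball_avg r \<phi> = (1 / measure lebesgue (ball (0::'a) r)) *\<^sub>R (LINT z:ball 0 r|lebesgue. \<phi> z)"

definition E_op :: "(real \<Rightarrow> real) \<Rightarrow> real \<Rightarrow> ('a::euclidean_space \<Rightarrow> 'a) \<Rightarrow> 'a \<Rightarrow> 'a" where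
  "E_op H r \<phi> x = H (2 - norm x / r) *\<^sub>R ball_avg r \<phi> + H (norm x / r - 1) *\<^sub>R \<phi> x"

text \<open>Divergence of E_r[phi] for a solenoidal phi (div phi = 0), restricted to the
  annulus and extended by zero.\<close>
definition divE_ann :: "(real \<Rightarrow> real) \<Rightarrow> real \<Rightarrow> ('a::euclidean_space \<Rightarrow> 'a) \<Rightarrow> 'a \<Rightarrow> real" where
  "divE_ann H r \<phi> x =
     (if x \<in> ball 0 (2*r) - cball 0 r
      then ball_avg r \<phi> \<bullet> grad (\<lambda>y. H (2 - norm y / r)) x
           + \<phi> x \<bullet> grad (\<lambda>y. H (norm y / r - 1)) x
      else 0)"

definition R_op :: "(real \<Rightarrow> real) \<Rightarrow> (('a::euclidean_space \<Rightarrow> real) \<Rightarrow> 'a \<Rightarrow> 'a) \<Rightarrow> real \<Rightarrow> ('a \<Rightarrow> 'a) \<Rightarrow> 'a \<Rightarrow> 'a" where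
  "R_op H Bog r \<phi> x = E_op H r \<phi> x - bog_scaled Bog r (divE_ann H r \<phi>) x"

definition R_at :: "(real \<Rightarrow> real) \<Rightarrow> (('a::euclidean_space \<Rightarrow> real) \<Rightarrow> 'a \<Rightarrow> 'a) \<Rightarrow> real \<Rightarrow> 'a \<Rightarrow> ('a \<Rightarrow> 'a) \<Rightarrow> 'a \<Rightarrow> 'a" where
  "R_at H Bog r h \<phi> x = R_op H Bog r (\<lambda>y. \<phi> (h + y)) (x - h)"

definition R_N :: "(real \<Rightarrow> real) \<Rightarrow> (('a::euclidean_space \<Rightarrow> real) \<Rightarrow> 'a \<Rightarrow> 'a) \<Rightarrow> nat \<Rightarrow> (nat \<Rightarrow> 'a) \<Rightarrow> (nat \<Rightarrow> real)
    \<Rightarrow> ('a \<Rightarrow> 'a) \<Rightarrow> 'a \<Rightarrow> 'a" where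
  "R_N H Bog N h r = foldr (\<lambda>k acc. R_at H Bog (5 ^ (k - 1) * r k) (h k) \<circ> acc) [1..<N+1] id"

end

theory Submission
  imports Defs
begin

lemma H_sym:
  assumes "cutoff H" shows "H Z + H (1 - Z) = 1"
proof -
  have sm: "smooth_fun H" and z: "\<And>Z. Z \<le> 1/4 \<Longrightarrow> H Z = 0" and o: "\<And>Z. Z \<ge> 3/4 \<Longrightarrow> H Z = 1"
   and d: "\<And>Z. deriv H Z = deriv H (1 - Z)"
    using assms unfolding cutoff_def by auto
  have diff: "\<And>x. H differentiable (at x)" using sm by (cases rule: smooth_fun.cases) auto
  hence D: "\<And>x. DERIV H x :> deriv H x" using DERIV_deriv_iff_real_differentiable by blast
  have "\<forall>x. DERIV (\<lambda>Z. H Z + H (1 - Z)) x :> 0"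
  proof
    fix x
    have g: "((\<lambda>Z. 1 - Z) has_real_derivative (-1)) (at x)"
      using DERIV_diff[OF DERIV_const[of 1] DERIV_ident] by simp
    have "DERIV (\<lambda>Z. H Z + H (1 - Z)) x :> deriv H x + deriv H (1 - x) * (- 1)"
      by (rule DERIV_add[OF D DERIV_chain2[OF D g]])
    thus "DERIV (\<lambda>Z. H Z + H (1 - Z)) x :> 0" using d[of x] by simp
  qed
  from DERIV_isconst_all[OF this, of Z 0] show ?thesis using z[of 0] o[of 1] by simp
qed

lemma ball_avg_const:
  fixes \<psi> :: "'a::euclidean_space \<Rightarrow> 'a"
  assumes "0 < \<rho>" "\<And>y. y \<in> ball 0 \<rho> \<Longrightarrow> \<psi> y = c"
  shows "ball_avg \<rho> \<psi> = c"
proof -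
  have "(LINT z:ball (0::'a) \<rho>|lebesgue. \<psi> z) = (LINT z:ball (0::'a) \<rho>|lebesgue. c)"
    using set_lebesgue_integral_cong[of "ball 0 \<rho>" lebesgue \<psi> "\<lambda>_. c"] assms by auto
  also have "\<dots> = measure lebesgue (ball (0::'a) \<rho>) *\<^sub>R c"
    by (rule set_integral_const) (use emeasure_bounded_finite[of "ball (0::'a) \<rho>"] in auto)
  finally show ?thesis unfolding ball_avg_def using assms(1) content_ball_gt_0_iff[of "0::'a" \<rho>] by simp
qed

lemma bog_out:
  assumes "bogovskii p Bog" "0 < \<rho>" "norm x \<le> \<rho> \<or> norm x \<ge> 2*\<rho>"
  shows "bog_scaled Bog \<rho> g x = 0"
proof -
  have n: "norm (x /\<^sub>R \<rho>) = norm x / \<rho>" using assms(2) by (simp add: divide_inverse_commute)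
  have "x /\<^sub>R \<rho> \<notin> annulus1"
    using assms(2,3) unfolding annulus1_def n by (auto simp: field_simps)
  thus ?thesis using assms(1) unfolding bogovskii_def bog_scaled_def by auto
qed

lemma bog_zero_fun:
  assumes "bogovskii p Bog"
  shows "Bog (\<lambda>x. 0) = (\<lambda>x. 0)"
proof -
  have adm: "bog_adm p (\<lambda>x. 0::real)" unfolding bog_adm_def by simp
  have "Bog (\<lambda>x. 0 * 0 + 0 * 0) = (\<lambda>x. 0 *\<^sub>R Bog (\<lambda>x. 0) x + 0 *\<^sub>R Bog (\<lambda>x. 0) x)"
    using assms adm unfolding bogovskii_def by blast
  thus ?thesis by simp
qed

lemma R_outside:
  assumes "cutoff H" "bogovskii p Bog" "0 < \<rho>" "norm (x - h) \<ge> 2*\<rho>"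
  shows "R_at H Bog \<rho> h \<psi> x = \<psi> x"
proof -
  have z: "\<And>Z. Z \<le> 1/4 \<Longrightarrow> H Z = 0" and o: "\<And>Z. Z \<ge> 3/4 \<Longrightarrow> H Z = 1"
    using assms(1) unfolding cutoff_def by auto
  have "norm (x - h) / \<rho> \<ge> 2" using assms(3,4) by (simp add: field_simps)
  hence "H (2 - norm (x - h) / \<rho>) = 0" "H (norm (x - h) / \<rho> - 1) = 1"
    using z[of "2 - norm (x - h) / \<rho>"] o[of "norm (x - h) / \<rho> - 1"] by linarith+
  moreover have "bog_scaled Bog \<rho> (divE_ann H \<rho> (\<lambda>y. \<psi> (h + y))) (x - h) = 0"
    using bog_out[OF assms(2,3)] assms(4) by auto
  ultimately show ?thesis unfolding R_at_def R_op_def E_op_def by simp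
qed

lemma R_inside:
  assumes "cutoff H" "bogovskii p Bog" "0 < \<rho>" "norm (x - h) \<le> \<rho>"
  shows "R_at H Bog \<rho> h \<psi> x = ball_avg \<rho> (\<lambda>y. \<psi> (h + y))"
proof -
  have z: "\<And>Z. Z \<le> 1/4 \<Longrightarrow> H Z = 0" and o: "\<And>Z. Z \<ge> 3/4 \<Longrightarrow> H Z = 1"
    using assms(1) unfolding cutoff_def by auto
  have "norm (x - h) / \<rho> \<le> 1" using assms(3,4) by (simp add: field_simps)
  hence "H (2 - norm (x - h) / \<rho>) = 1" "H (norm (x - h) / \<rho> - 1) = 0"
    using o[of "2 - norm (x - h) / \<rho>"] z[of "norm (x - h) / \<rho> - 1"] by linarith+
  moreover have "bog_scaled Bog \<rho> (divE_ann H \<rho> (\<lambda>y. \<psi> (h + y))) (x - h) = 0"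
    using bog_out[OF assms(2,3)] assms(4) by auto
  ultimately show ?thesis unfolding R_at_def R_op_def E_op_def by simp
qed

lemma grad_one_minus:
  fixes B :: "'a::euclidean_space \<Rightarrow> real"
  assumes "B differentiable (at y)"
  shows "grad (\<lambda>y. 1 - B y) y = - grad B y"
proof -
  have D: "(B has_derivative frechet_derivative B (at y)) (at y)"
    using assms frechet_derivative_works by blast
  have "((\<lambda>y. 1 - B y) has_derivative (\<lambda>v. 0 - frechet_derivative B (at y) v)) (at y)"
    by (intro derivative_intros D)
  hence "(\<lambda>v. 0 - frechet_derivative B (at y) v) = frechet_derivative (\<lambda>y. 1 - B y) (at y)"
    by (rule frechet_derivative_at)
  hence "grad (\<lambda>y. 1 - B y) y = (\<Sum>b\<in>Basis. (- frechet_derivative B (at y) b) *\<^sub>R b)"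
    unfolding grad_def by (metis diff_0)
  also have "\<dots> = - grad B y" unfolding grad_def by (simp add: sum_negf)
  finally show ?thesis .
qed

lemma R_const:
  fixes \<psi> :: "'a::euclidean_space \<Rightarrow> 'a"
  assumes "cutoff H" "bogovskii p Bog" "0 < \<rho>" "\<forall>y\<in>ball h (2*\<rho>). \<psi> y = c"
    and "x \<in> ball h (2*\<rho>)"
  shows "R_at H Bog \<rho> h \<psi> x = c"
proof -
  define \<psi>' where "\<psi>' = (\<lambda>y. \<psi> (h + y))"
  have \<psi>'c: "\<psi>' y = c" if "norm y < 2*\<rho>" for y
    using assms(4) that unfolding \<psi>'_def by (auto simp: dist_norm)
  have avg: "ball_avg \<rho> \<psi>' = c"
    by (rule ball_avg_const[OF assms(3)]) (use \<psi>'c assms(3) in auto)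
  have sm: "smooth_fun H" using assms(1) unfolding cutoff_def by auto
  have Hd: "\<And>x. H differentiable (at x)" using sm by (cases rule: smooth_fun.cases) auto
  define B where "B = (\<lambda>y::'a. H (norm y / \<rho> - 1))"
  have AB: "(\<lambda>y::'a. H (2 - norm y / \<rho>)) = (\<lambda>y. 1 - B y)"
  proof
    fix y :: 'a
    have "1 - (2 - norm y / \<rho>) = norm y / \<rho> - 1" by simp
    thus "H (2 - norm y / \<rho>) = 1 - B y"
      using H_sym[OF assms(1), of "2 - norm y / \<rho>"] unfolding B_def by simp
  qed
  have Bd: "B differentiable (at y)" if "y \<noteq> 0" for y
  proof -
    have "(\<lambda>y::'a. norm y / \<rho> - 1) differentiable (at y)"
      using that assms(3) by (intro derivative_intros) auto
    thus ?thesis unfolding B_def by (rule differentiable_compose[OF Hd])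
  qed
  have div0: "divE_ann H \<rho> \<psi>' = (\<lambda>y. 0)"
  proof
    fix y :: 'a
    show "divE_ann H \<rho> \<psi>' y = 0"
    proof (cases "y \<in> ball 0 (2*\<rho>) - cball 0 \<rho>")
      case True
      hence "y \<noteq> 0" "norm y < 2*\<rho>" using assms(3) by auto
      hence "grad (\<lambda>y. H (2 - norm y / \<rho>)) y = - grad B y" "\<psi>' y = c"
        using grad_one_minus[OF Bd] AB \<psi>'c by auto
      thus ?thesis using True unfolding divE_ann_def B_def by (simp add: inner_minus_right avg)
    next
      case False
      thus ?thesis unfolding divE_ann_def by (simp only: if_False)
    qed
  qed
  have bog0: "bog_scaled Bog \<rho> (divE_ann H \<rho> \<psi>') (x - h) = 0"
    unfolding div0 bog_scaled_def using bog_zero_fun[OF assms(2)] by simp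
  have Hs: "H (2 - norm (x - h) / \<rho>) + H (norm (x - h) / \<rho> - 1) = 1"
    using H_sym[OF assms(1), of "2 - norm (x - h) / \<rho>"] by simp
  have "\<psi> x = c" using assms(4,5) by auto
  hence "E_op H \<rho> \<psi>' (x - h) = c"
    unfolding E_op_def avg using Hs unfolding \<psi>'_def
    by (metis add.commute diff_add_cancel scaleR_add_left scaleR_one)
  thus ?thesis using bog0 unfolding R_at_def R_op_def \<psi>'_def by simp
qed

lemma r_mono:
  fixes r :: "nat \<Rightarrow> real"
  assumes "\<And>k. 1 \<le> k \<Longrightarrow> k < N \<Longrightarrow> r k \<le> r (k + 1)"
  shows "1 \<le> k \<Longrightarrow> k \<le> n \<Longrightarrow> n \<le> N \<Longrightarrow> r k \<le> r n"
proof (induction n)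
  case 0 thus ?case by simp
next
  case (Suc n)
  show ?case
  proof (cases "k = Suc n")
    case False
    hence "r k \<le> r n" using Suc by auto
    also have "r n \<le> r (Suc n)" using assms[of n] Suc False by auto
    finally show ?thesis .
  qed simp
qed

lemma G_step:
  assumes "j \<le> N"
  shows "foldr (\<lambda>k acc. T k \<circ> acc) [j..<N+1] id = T j \<circ> foldr (\<lambda>k acc. T k \<circ> acc) [Suc j..<N+1] id"
proof -
  have "[j..<N+1] = j # [Suc j..<N+1]" using assms by (intro upt_conv_Cons) simp
  thus ?thesis by (simp only: foldr.simps o_apply)
qed

theorem lemma3p2:
  fixes H :: "real \<Rightarrow> real"
    and Bog :: "('a::euclidean_space \<Rightarrow> real) \<Rightarrow> 'a \<Rightarrow> 'a"
    and p :: real and N :: nat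
    and h :: "nat \<Rightarrow> 'a" and r :: "nat \<Rightarrow> real"
    and \<phi> :: "'a \<Rightarrow> 'a"
  assumes "cutoff H"
    and "1 < p"
    and "bogovskii p Bog"
    and "N \<ge> 1"
    and "0 < r 1"
    and "\<And>k. 1 \<le> k \<Longrightarrow> k < N \<Longrightarrow> r k \<le> r (k + 1)"
    and "Lp_loc p \<phi>"
    and "solenoidal \<phi>"
  shows "\<forall>n\<in>{1..N}. \<exists>\<Lambda>. \<forall>x\<in>ball (h n) (r n). R_N H Bog N h r \<phi> x = \<Lambda>"
proof
  fix n assume n: "n \<in> {1..N}"
  define T where "T = (\<lambda>k. R_at H Bog (5 ^ (k - 1) * r k) (h k))"
  define G where "G = (\<lambda>j. foldr (\<lambda>k acc. T k \<circ> acc) [j..<N+1] id)"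
  have RG: "R_N H Bog N h r = G 1" unfolding R_N_def G_def T_def by simp
  have Gs: "G j = T j \<circ> G (Suc j)" if "j \<le> N" for j
    unfolding G_def by (rule G_step[OF that])
  have rm: "r k \<le> r n" if "1 \<le> k" "k \<le> n" for k
    using r_mono[where N=N and r=r, OF assms(6)] that n by auto
  have rpos: "0 < r k" if "1 \<le> k" "k \<le> n" for k
    using r_mono[where N=N and r=r and k=1 and n=k, OF assms(6)] that n assms(5) by auto
  have main: "\<forall>m. m < n \<longrightarrow> (\<exists>c. \<forall>x\<in>ball (h n) (5 ^ (n - m - 1) * r n). G (n - m) \<phi> x = c)"
  proof
    fix m show "m < n \<longrightarrow> (\<exists>c. \<forall>x\<in>ball (h n) (5 ^ (n - m - 1) * r n). G (n - m) \<phi> x = c)"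
    proof (induction m)
      case 0
      have \<rho>: "0 < 5 ^ (n - 1) * r n" using rpos[of n] n by auto
      show ?case
      proof (intro impI exI ballI)
        fix x assume "x \<in> ball (h n) (5 ^ (n - 0 - 1) * r n)"
        hence "norm (x - h n) \<le> 5 ^ (n - 1) * r n" by (simp add: dist_norm norm_minus_commute)
        thus "G (n - 0) \<phi> x = ball_avg (5 ^ (n - 1) * r n) (\<lambda>y. G (Suc n) \<phi> (h n + y))"
          using Gs[of n] n R_inside[OF assms(1,3) \<rho>] unfolding T_def by auto
      qed
    next
      case (Suc m)
      show ?case
      proof
        assume mn: "Suc m < n"
        define k where "k = n - Suc m"
        have k1: "1 \<le> k" "k < n" "Suc k = n - m" using mn unfolding k_def by auto
        obtain c where c: "\<forall>x\<in>ball (h n) (5 ^ (n - m - 1) * r n). G (Suc k) \<phi> x = c"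
          using Suc mn k1 by auto
        define a :: real where "a = 5 ^ (k - 1)"
        have a: "0 < a" unfolding a_def by simp
        have big: "5 ^ (n - m - 1) * r n = 5 * a * r n"
        proof -
          have "n - m - 1 = Suc (k - 1)" using k1 by simp
          thus ?thesis unfolding a_def by simp
        qed
        define \<rho> where "\<rho> = a * r k"
        have \<rho>: "0 < \<rho>" unfolding \<rho>_def using a rpos[of k] k1 by auto
        have \<rho>le: "\<rho> \<le> a * r n" unfolding \<rho>_def using a rm[of k] k1 by auto
        have Tk: "T k = R_at H Bog \<rho> (h k)" unfolding T_def \<rho>_def a_def by simp
        have Gk: "G k \<phi> x = R_at H Bog \<rho> (h k) (G (Suc k) \<phi>) x" for x
          using Gs[of k] k1 n Tk by auto
        have small: "n - Suc m - 1 = k - 1" unfolding k_def by simp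
        show "\<exists>c. \<forall>x\<in>ball (h n) (5 ^ (n - Suc m - 1) * r n). G (n - Suc m) \<phi> x = c"
        proof (intro exI ballI)
          fix x assume x: "x \<in> ball (h n) (5 ^ (n - Suc m - 1) * r n)"
          hence xn: "norm (x - h n) < a * r n" unfolding small a_def by (simp add: dist_norm norm_minus_commute)
          have xbig: "x \<in> ball (h n) (5 ^ (n - m - 1) * r n)"
          proof -
            have "0 < a * r n" using a rpos[of n] n by simp
            hence "norm (x - h n) < 5 * a * r n" using xn by simp
            thus ?thesis unfolding big by (simp add: dist_norm norm_minus_commute)
          qed
          show "G (n - Suc m) \<phi> x = c"
          proof (cases "norm (x - h k) \<ge> 2 * \<rho>")
            case True
            thus ?thesis using R_outside[OF assms(1,3) \<rho> True] Gk c xbig unfolding k_def by auto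
          next
            case False
            have dkn: "norm (h k - h n) < 3 * a * r n"
              using False xn \<rho>le norm_triangle_ineq[of "h k - x" "x - h n"]
              by (simp add: norm_minus_commute)
            have sub: "\<forall>y\<in>ball (h k) (2 * \<rho>). G (Suc k) \<phi> y = c"
            proof
              fix y assume "y \<in> ball (h k) (2 * \<rho>)"
              hence "norm (y - h k) < 2 * \<rho>" by (simp add: dist_norm norm_minus_commute)
              hence "norm (y - h n) < 5 * a * r n"
                using dkn \<rho>le norm_triangle_ineq[of "y - h k" "h k - h n"] by simp
              thus "G (Suc k) \<phi> y = c" using c unfolding big by (simp add: dist_norm norm_minus_commute)
            qed
            have "x \<in> ball (h k) (2 * \<rho>)" using False by (simp add: dist_norm norm_minus_commute)
            thus ?thesis using R_const[OF assms(1,3) \<rho> sub] Gk unfolding k_def by auto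
          qed
        qed
      qed
    qed
  qed
  from main[rule_format, of "n - 1"] n obtain c where
    "\<forall>x\<in>ball (h n) (5 ^ (n - (n - 1) - 1) * r n). G (n - (n - 1)) \<phi> x = c" by auto
  moreover have "n - (n - 1) = 1" using n by auto
  ultimately show "\<exists>\<Lambda>. \<forall>x\<in>ball (h n) (r n). R_N H Bog N h r \<phi> x = \<Lambda>" using RG by auto
qed

end
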